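(* For every integer $n \ge 5$, there exists an extremal point of $\Gamma(n)$ of rank $n$; hence $MR(n) \ge n$.
   Context: A state $\rho$ on $M_n(\mathbb{C}) \otimes M_n(\mathbb{C})$ is a marginal tracial state if $\rho(A\otimes I) = \mathrm{tr}(A)$ and $\rho(I \otimes B) = \mathrm{tr}(B)$ for all $A,B \in M_n(\mathbb{C})$, where $\mathrm{tr}$ is the normalized trace. $\Gamma(n)$ is the convex set of all marginal tracial states on $M_n(\mathbb{C}) \otimes M_n(\mathbb{C})$. For a state $\rho$, $\mathrm{rank}(\rho)$ is the rank of its density matrix. $MR(n)$ denotes the maximum of $\mathrm{rank}(\rho)$ over all extremal points $\rho$ of $\Gamma(n)$. *)

theory Defs
  imports "HOL-Analysis.Analysis"
begin

text \<open>Matrices in M_n(C) are indexed by a finite type 'n with CARD('n) = n;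
  M_n(C) (x) M_n(C) = M_{n^2}(C) is indexed by 'n \<times> 'n.
  A state is represented by its density matrix D, via rho(X) = trace (D ** X).\<close>

definition kron :: "complex^'n^'n \<Rightarrow> complex^'n^'n \<Rightarrow> complex^('n \<times> 'n)^('n \<times> 'n)" where
  "kron A B = (\<chi> p. \<chi> q. A $ fst p $ fst q * B $ snd p $ snd q)"

definition psd :: "complex^'m^'m \<Rightarrow> bool" where
  "psd D \<longleftrightarrow> (\<forall>a b. D $ a $ b = cnj (D $ b $ a)) \<and>
     (\<forall>x :: complex^'m. let q = (\<Sum>a\<in>UNIV. \<Sum>b\<in>UNIV. cnj (x $ a) * D $ a $ b * x $ b)
        in Im q = 0 \<and> Re q \<ge> 0)"

definition density :: "complex^'m^'m \<Rightarrow> bool" where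
  "density D \<longleftrightarrow> psd D \<and> trace D = 1"

definition state_of :: "complex^'m^'m \<Rightarrow> complex^'m^'m \<Rightarrow> complex" where
  "state_of D X = trace (D ** X)"

definition ntr :: "complex^'n^'n \<Rightarrow> complex" where
  "ntr A = trace A / of_nat CARD('n)"

definition Gamma_mt :: "(complex^('n::finite \<times> 'n)^('n \<times> 'n)) set" where
  "Gamma_mt = {D. density D \<and>
     (\<forall>A :: complex^'n^'n. state_of D (kron A (mat 1)) = ntr A) \<and>
     (\<forall>B :: complex^'n^'n. state_of D (kron (mat 1) B) = ntr B)}"

definition MR :: "'n::finite itself \<Rightarrow> nat" where
  "MR _ = Max (rank ` {D :: complex^('n \<times> 'n)^('n \<times> 'n). D extreme_point_of Gamma_mt})"

end

theory Submission
  imports Defs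
begin

definition z0 :: "'n::finite" where "z0 = undefined"

definition NN :: "'n::finite itself \<Rightarrow> real" where "NN _ = real CARD('n)"

definition vv :: "'n::finite \<Rightarrow> 'n \<times> 'n \<Rightarrow> real" where
  "vv c p = (let N = real CARD('n) in
     if fst p = z0 then (if c = snd p then 1/N else 0)
     else if c = fst p \<and> snd p = z0 then 1/N
     else if c = z0 \<and> snd p = fst p then sqrt (N - 1) / N else 0)"

definition DD :: "complex^('n::finite \<times> 'n)^('n \<times> 'n)" where
  "DD = (\<chi> p q. complex_of_real (\<Sum>c\<in>UNIV. vv c p * vv c q))"

definition supp :: "'n::finite \<times> 'n \<Rightarrow> bool" where
  "supp p \<longleftrightarrow> fst p = z0 \<or> snd p = z0 \<or> fst p = snd p"

definition qf :: "complex^'m^'m \<Rightarrow> complex^'m \<Rightarrow> complex" where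
  "qf M x = (\<Sum>a\<in>UNIV. \<Sum>b\<in>UNIV. cnj (x $ a) * M $ a $ b * x $ b)"

lemma vv_sym: "vv c (i,j) = vv c (j,i)"
  by (auto simp: vv_def Let_def)

lemma vv_nsupp: "\<not> supp p \<Longrightarrow> vv c p = 0"
  by (auto simp: vv_def supp_def Let_def)

lemma qf_DD: "qf DD x = complex_of_real (\<Sum>c\<in>UNIV. (cmod (\<Sum>p\<in>UNIV. complex_of_real (vv c p) * x $ p))\<^sup>2)"
proof -
  have "qf DD x = (\<Sum>a\<in>UNIV. \<Sum>b\<in>UNIV. \<Sum>c\<in>UNIV. (complex_of_real (vv c a) * cnj (x $ a)) * (complex_of_real (vv c b) * x $ b))"
    unfolding qf_def DD_def
  proof (intro sum.cong refl)
    fix a b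
    have "cnj (x $ a) * complex_of_real (\<Sum>c\<in>UNIV. vv c a * vv c b) * x $ b
       = (\<Sum>c\<in>UNIV. cnj (x $ a) * complex_of_real (vv c a * vv c b) * x $ b)"
      by (simp only: of_real_sum sum_distrib_left sum_distrib_right)
    also have "\<dots> = (\<Sum>c\<in>UNIV. (complex_of_real (vv c a) * cnj (x $ a)) * (complex_of_real (vv c b) * x $ b))"
      by (intro sum.cong refl) (simp add: mult_ac)
    finally show "cnj (x $ a) * (\<chi> p q. complex_of_real (\<Sum>c\<in>UNIV. vv c p * vv c q)) $ a $ b * x $ b = (\<Sum>c\<in>UNIV. (complex_of_real (vv c a) * cnj (x $ a)) * (complex_of_real (vv c b) * x $ b))" by simp
  qed
  also have "\<dots> = (\<Sum>a\<in>UNIV. \<Sum>c\<in>UNIV. \<Sum>b\<in>UNIV. (complex_of_real (vv c a) * cnj (x $ a)) * (complex_of_real (vv c b) * x $ b))"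
    by (intro sum.cong refl, rule sum.swap)
  also have "\<dots> = (\<Sum>c\<in>UNIV. \<Sum>a\<in>UNIV. \<Sum>b\<in>UNIV. (complex_of_real (vv c a) * cnj (x $ a)) * (complex_of_real (vv c b) * x $ b))"
    by (rule sum.swap)
  also have "\<dots> = (\<Sum>c\<in>UNIV. cnj (\<Sum>p\<in>UNIV. complex_of_real (vv c p) * x $ p) * (\<Sum>p\<in>UNIV. complex_of_real (vv c p) * x $ p))"
    by (simp only: sum_product cnj_sum complex_cnj_mult complex_cnj_complex_of_real)
  also have "\<dots> = complex_of_real (\<Sum>c\<in>UNIV. (cmod (\<Sum>p\<in>UNIV. complex_of_real (vv c p) * x $ p))\<^sup>2)"
    unfolding of_real_sum
  proof (intro sum.cong refl)
    fix c
    show "cnj (\<Sum>p\<in>UNIV. complex_of_real (vv c p) * x $ p) * (\<Sum>p\<in>UNIV. complex_of_real (vv c p) * x $ p) = complex_of_real ((cmod (\<Sum>p\<in>UNIV. complex_of_real (vv c p) * x $ p))\<^sup>2)"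
      by (simp only: complex_norm_square mult.commute)
  qed
  finally show ?thesis .
qed


definition ss :: "'n::finite itself \<Rightarrow> real" where "ss _ = sqrt (real CARD('n) - 1)"

definition rel :: "complex^('n::finite \<times> 'n)^('n \<times> 'n) \<Rightarrow> bool" where
 "rel M \<longleftrightarrow> (\<forall>a b. M$a$b = cnj (M$b$a)) \<and> (\<forall>r p. \<not> supp p \<longrightarrow> M$r$p = 0)
    \<and> (\<forall>r k. k \<noteq> z0 \<longrightarrow> M$r$(k,z0) = M$r$(z0,k))
    \<and> (\<forall>r k. k \<noteq> z0 \<longrightarrow> M$r$(k,k) = of_real (ss TYPE('n)) * M$r$(z0,z0))"

definition RR :: "complex^('n::finite \<times> 'n)^('n \<times> 'n) \<Rightarrow> 'n \<Rightarrow> 'n \<Rightarrow> complex" where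
  "RR M i i' = (\<Sum>j\<in>UNIV. M$(i,j)$(i',j))"

lemma sum_two:
  fixes f :: "'a::finite \<Rightarrow> 'b::comm_monoid_add"
  assumes "a \<noteq> b" "\<And>j. j \<noteq> a \<Longrightarrow> j \<noteq> b \<Longrightarrow> f j = 0"
  shows "sum f UNIV = f a + f b"
proof -
  have "sum f UNIV = sum f {a,b}"
    by (rule sum.mono_neutral_right) (use assms in auto)
  then show ?thesis using assms by simp
qed

lemma sum_one:
  fixes f :: "'a::finite \<Rightarrow> 'b::comm_monoid_add"
  assumes "\<And>j. j \<noteq> a \<Longrightarrow> f j = 0"
  shows "sum f UNIV = f a"
proof -
  have "sum f UNIV = sum f {a}"
    by (rule sum.mono_neutral_right) (use assms in auto)
  then show ?thesis by simp
qed

context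
  fixes M :: "complex^('n::finite \<times> 'n)^('n \<times> 'n)"
  assumes R: "rel M"
begin

lemma rel_herm: "M$a$b = cnj (M$b$a)" using R unfolding rel_def by blast
lemma rel_col0: "\<not> supp p \<Longrightarrow> M$r$p = 0" using R unfolding rel_def by blast
lemma rel_row0: "\<not> supp p \<Longrightarrow> M$p$r = 0" using rel_col0[of p r] rel_herm[of p r] by simp
lemma rel_col1: "k \<noteq> z0 \<Longrightarrow> M$r$(k,z0) = M$r$(z0,k)" using R unfolding rel_def by blast
lemma rel_row1: "k \<noteq> z0 \<Longrightarrow> M$(k,z0)$r = M$(z0,k)$r"
  using rel_col1[of k r] rel_herm[of "(k,z0)" r] rel_herm[of "(z0,k)" r] by simp
lemma rel_col2: "k \<noteq> z0 \<Longrightarrow> M$r$(k,k) = of_real (ss TYPE('n)) * M$r$(z0,z0)" using R unfolding rel_def by blast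
lemma rel_row2: "k \<noteq> z0 \<Longrightarrow> M$(k,k)$r = of_real (ss TYPE('n)) * M$(z0,z0)$r"
  using rel_col2[of k r] rel_herm[of "(k,k)" r] rel_herm[of "(z0,z0)" r] by simp

lemma RR_zk: "k \<noteq> z0 \<Longrightarrow> RR M z0 k = M$(z0,z0)$(z0,k) + of_real (ss TYPE('n)) * M$(z0,k)$(z0,z0)"
  unfolding RR_def
  by (subst sum_two[of z0 k]) (auto intro: rel_col0 simp: supp_def rel_col1 rel_col2)

lemma RR_kz: "k \<noteq> z0 \<Longrightarrow> RR M k z0 = cnj (RR M z0 k)"
  unfolding RR_def cnj_sum by (intro sum.cong refl) (rule rel_herm)

lemma RR_kl:
  assumes kl: "k \<noteq> z0" "l \<noteq> z0" "k \<noteq> l"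
  shows "RR M k l = M$(z0,k)$(z0,l)"
proof -
  have "RR M k l = M $ (k, z0) $ (l, z0)"
    unfolding RR_def
  proof (rule sum_one)
    fix j :: 'n assume "j \<noteq> z0"
    show "M $ (k, j) $ (l, j) = 0"
    proof (cases "j = k")
      case True then show ?thesis using \<open>j \<noteq> z0\<close> kl by (intro rel_col0) (auto simp: supp_def)
    next
      case False then show ?thesis using \<open>j \<noteq> z0\<close> kl by (intro rel_row0) (auto simp: supp_def)
    qed
  qed
  then show ?thesis using kl by (simp add: rel_row1 rel_col1)
qed

lemma RR_kk: "k \<noteq> z0 \<Longrightarrow> RR M k k = M$(z0,k)$(z0,k) + of_real ((ss TYPE('n))\<^sup>2) * M$(z0,z0)$(z0,z0)"
  unfolding RR_def
  by (subst sum_two[of z0 k]) (auto intro: rel_col0 simp: supp_def rel_col1 rel_row1 rel_col2 rel_row2 power2_eq_square)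

end

definition rep :: "'n::finite \<times> 'n \<Rightarrow> 'n \<times> 'n" where
  "rep q = (if fst q = z0 then q else if snd q = z0 then (z0, fst q) else (z0,z0))"
definition lam :: "'n::finite \<times> 'n \<Rightarrow> complex" where
  "lam q = (if fst q = z0 \<or> snd q = z0 then 1 else if fst q = snd q then of_real (ss TYPE('n)) else 0)"

lemma rel_col_rep:
  assumes R: "rel M" shows "M$r$q = lam q * M$r$(rep q)"
proof -
  obtain a b where q: "q = (a,b)" by force
  show ?thesis
    using rel_col0[OF R, of q r] rel_col1[OF R, of a r] rel_col2[OF R, of a r]
    by (auto simp: q lam_def rep_def supp_def)
qed

lemma rel_rep:
  assumes R: "rel M" shows "M$p$q = lam p * lam q * M$(rep p)$(rep q)"
proof -
  have cl: "cnj (lam p) = lam p" by (simp add: lam_def)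
  have "M$p$q = lam q * M$p$(rep q)" by (rule rel_col_rep[OF R])
  also have "M$p$(rep q) = cnj (M$(rep q)$p)" by (rule rel_herm[OF R])
  also have "M$(rep q)$p = lam p * M$(rep q)$(rep p)" by (rule rel_col_rep[OF R])
  also have "M$(rep q)$(rep p) = cnj (M$(rep p)$(rep q))" by (rule rel_herm[OF R])
  finally show ?thesis using cl by (simp add: mult_ac)
qed

lemma rel_eq:
  assumes "rel M" "rel M'" "\<And>c d. M$(z0,c)$(z0,d) = M'$(z0,c)$(z0,d)"
  shows "M = M'"
proof -
  have "\<And>q. \<exists>c. rep q = (z0,c)" by (auto simp: rep_def)
  then have "\<And>p q. M$(rep p)$(rep q) = M'$(rep p)$(rep q)" using assms(3) by metis
  then show ?thesis unfolding vec_eq_iff using rel_rep[OF assms(1)] rel_rep[OF assms(2)] by metis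
qed


lemma vv_z: "vv c (z0, d) = (if c = d then 1 / real CARD('n::finite) else 0)"
  for c d :: "'n::finite"
  by (simp add: vv_def Let_def)

lemma vv_kk: "k \<noteq> z0 \<Longrightarrow> vv c (k,k) = ss TYPE('n) * vv c (z0,z0)"
  for c k :: "'n::finite"
  by (simp add: vv_def Let_def ss_def)

lemma DD_entry: "DD $ p $ q = complex_of_real (\<Sum>c\<in>UNIV. vv c p * vv c q)"
  by (simp add: DD_def)

lemma rel_DD: "rel (DD :: complex^('n::finite \<times> 'n)^('n \<times> 'n))"
  unfolding rel_def
proof (intro conjI allI impI)
  fix a b :: "'n \<times> 'n"
  show "DD $ a $ b = cnj (DD $ b $ a)" by (simp add: DD_entry mult.commute)
next
  fix r p :: "'n \<times> 'n" assume "\<not> supp p"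
  then show "DD $ r $ p = 0" by (simp add: DD_entry vv_nsupp)
next
  fix r :: "'n \<times> 'n" and k :: 'n assume "k \<noteq> z0"
  show "DD $ r $ (k, z0) = DD $ r $ (z0, k)" by (simp add: DD_entry vv_sym[of _ k])
next
  fix r :: "'n \<times> 'n" and k :: 'n assume k: "k \<noteq> z0"
  have "DD $ r $ (k, k) = complex_of_real (\<Sum>c\<in>UNIV. ss TYPE('n) * (vv c r * vv c (z0,z0)))"
    unfolding DD_entry using k by (simp add: vv_kk mult_ac)
  also have "\<dots> = complex_of_real (ss TYPE('n)) * DD $ r $ (z0, z0)"
    by (simp add: DD_entry sum_distrib_left[symmetric])
  finally show "DD $ r $ (k, k) = complex_of_real (ss TYPE('n)) * DD $ r $ (z0, z0)" .
qed

lemma DD_rep: "(DD :: complex^('n::finite \<times> 'n)^('n \<times> 'n)) $ (z0,c) $ (z0,d) = (if c = d then 1 / (of_nat CARD('n))\<^sup>2 else 0)"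
proof -
  have "(\<Sum>e\<in>UNIV. vv e (z0,c) * vv e (z0::'n,d)) = (if c = d then 1 / (real CARD('n))\<^sup>2 else 0)"
    unfolding vv_z by (subst sum_one[of c]) (auto simp: power2_eq_square)
  then show ?thesis by (simp add: DD_entry)
qed

lemma psd_iff_qf: "psd M \<longleftrightarrow> (\<forall>a b. M$a$b = cnj (M$b$a)) \<and> (\<forall>x. Im (qf M x) = 0 \<and> Re (qf M x) \<ge> 0)"
  by (simp add: psd_def qf_def Let_def)

lemma psd_DD: "psd (DD :: complex^('n::finite \<times> 'n)^('n \<times> 'n))"
  unfolding psd_iff_qf
proof (intro conjI allI)
  fix a b :: "'n \<times> 'n" show "DD $ a $ b = cnj (DD $ b $ a)" by (rule rel_herm[OF rel_DD])
next
  fix x :: "complex^('n \<times> 'n)"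
  show "Im (qf DD x) = 0" "0 \<le> Re (qf DD x)" by (simp_all add: qf_DD sum_nonneg)
qed


lemma sum_pair: "(\<Sum>p\<in>(UNIV::('a::finite \<times> 'b::finite) set). f p) = (\<Sum>i\<in>UNIV. \<Sum>j\<in>UNIV. f (i,j))"
  by (subst UNIV_Times_UNIV[symmetric]) (simp add: sum.cartesian_product split_def)

definition CC :: "complex^('n::finite \<times> 'n)^('n \<times> 'n) \<Rightarrow> 'n \<Rightarrow> 'n \<Rightarrow> complex" where
  "CC M j j' = (\<Sum>i\<in>UNIV. M$(i,j)$(i,j'))"

lemma state_kron1:
  fixes M :: "complex^('n::finite \<times> 'n)^('n \<times> 'n)"
  shows "state_of M (kron X (mat 1)) = (\<Sum>i\<in>UNIV. \<Sum>i'\<in>UNIV. X$i'$i * RR M i i')"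
proof -
  have "state_of M (kron X (mat 1)) = (\<Sum>i\<in>UNIV. \<Sum>j\<in>UNIV. \<Sum>i'\<in>UNIV. \<Sum>j'\<in>UNIV.
          M$(i,j)$(i',j') * (X$i'$i * (if j' = j then 1 else 0)))"
    unfolding state_of_def trace_def matrix_matrix_mult_def kron_def
    by (simp add: sum_pair mat_def)
  also have "\<dots> = (\<Sum>i\<in>UNIV. \<Sum>j\<in>UNIV. \<Sum>i'\<in>UNIV. X$i'$i * M$(i,j)$(i',j))"
  proof (intro sum.cong refl)
    fix i j i'
    show "(\<Sum>j'\<in>UNIV. M$(i,j)$(i',j') * (X$i'$i * (if j' = j then 1 else 0))) = X$i'$i * M$(i,j)$(i',j)"
      by (subst sum_one[of j]) auto
  qed
  also have "\<dots> = (\<Sum>i\<in>UNIV. \<Sum>i'\<in>UNIV. \<Sum>j\<in>UNIV. X$i'$i * M$(i,j)$(i',j))"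
    by (rule sum.cong[OF refl], rule sum.swap)
  also have "\<dots> = (\<Sum>i\<in>UNIV. \<Sum>i'\<in>UNIV. X$i'$i * RR M i i')"
    by (simp add: RR_def sum_distrib_left)
  finally show ?thesis .
qed

lemma state_kron2:
  fixes M :: "complex^('n::finite \<times> 'n)^('n \<times> 'n)"
  shows "state_of M (kron (mat 1) X) = (\<Sum>j\<in>UNIV. \<Sum>j'\<in>UNIV. X$j'$j * CC M j j')"
proof -
  have "state_of M (kron (mat 1) X) = (\<Sum>i\<in>UNIV. \<Sum>j\<in>UNIV. \<Sum>i'\<in>UNIV. \<Sum>j'\<in>UNIV.
          M$(i,j)$(i',j') * ((if i' = i then 1 else 0) * X$j'$j))"
    unfolding state_of_def trace_def matrix_matrix_mult_def kron_def
    by (simp add: sum_pair mat_def)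
  also have "\<dots> = (\<Sum>i\<in>UNIV. \<Sum>j\<in>UNIV. \<Sum>j'\<in>UNIV. X$j'$j * M$(i,j)$(i,j'))"
  proof (rule sum.cong[OF refl], rule sum.cong[OF refl])
    fix i j
    show "(\<Sum>i'\<in>UNIV. \<Sum>j'\<in>UNIV. M$(i,j)$(i',j') * ((if i' = i then 1 else 0) * X$j'$j)) = (\<Sum>j'\<in>UNIV. X$j'$j * M$(i,j)$(i,j'))"
      by (subst sum_one[of i]) (auto simp: mult_ac)
  qed
  also have "\<dots> = (\<Sum>j\<in>UNIV. \<Sum>j'\<in>UNIV. \<Sum>i\<in>UNIV. X$j'$j * M$(i,j)$(i,j'))"
    by (subst sum.swap) (rule sum.cong[OF refl], rule sum.swap)
  also have "\<dots> = (\<Sum>j\<in>UNIV. \<Sum>j'\<in>UNIV. X$j'$j * CC M j j')"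
    by (simp add: CC_def sum_distrib_left)
  finally show ?thesis .
qed

lemma ntr_eq: "ntr (X :: complex^'n^'n) = (\<Sum>i\<in>UNIV. X$i$i) / of_nat CARD('n)"
  by (simp add: ntr_def trace_def)

lemma marg_suff:
  fixes F :: "'n::finite \<Rightarrow> 'n \<Rightarrow> complex"
  assumes "\<And>i i'. F i i' = (if i = i' then 1 / of_nat CARD('n) else 0)"
  shows "(\<Sum>i\<in>UNIV. \<Sum>i'\<in>UNIV. X$i'$i * F i i') = ntr X"
proof -
  have "(\<Sum>i\<in>UNIV. \<Sum>i'\<in>UNIV. X$i'$i * F i i') = (\<Sum>i\<in>UNIV. X$i$i / of_nat CARD('n))"
  proof (intro sum.cong refl)
    fix i show "(\<Sum>i'\<in>UNIV. X$i'$i * F i i') = X$i$i / of_nat CARD('n)"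
      by (subst sum_one[of i]) (auto simp: assms)
  qed
  then show ?thesis by (simp add: ntr_eq sum_divide_distrib)
qed

lemma marg_nec:
  fixes F :: "'n::finite \<Rightarrow> 'n \<Rightarrow> complex"
  assumes "\<And>X :: complex^'n^'n. (\<Sum>i\<in>UNIV. \<Sum>i'\<in>UNIV. X$i'$i * F i i') = ntr X"
  shows "F i i' = (if i = i' then 1 / of_nat CARD('n) else 0)"
proof -
  define X :: "complex^'n^'n" where "X = (\<chi> a b. if a = i' \<and> b = i then 1 else 0)"
  have "(\<Sum>a\<in>UNIV. \<Sum>b\<in>UNIV. X$b$a * F a b) = F i i'"
  proof -
    have "(\<Sum>a\<in>UNIV. \<Sum>b\<in>UNIV. X$b$a * F a b) = (\<Sum>b\<in>UNIV. X$b$i * F i b)"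
      by (rule sum_one) (simp add: X_def)
    also have "\<dots> = X$i'$i * F i i'"
      by (rule sum_one) (simp add: X_def)
    finally show ?thesis by (simp add: X_def)
  qed
  moreover have "ntr X = (if i = i' then 1 / of_nat CARD('n) else 0)"
    unfolding ntr_eq X_def by (subst sum_one[of i]) auto
  ultimately show ?thesis using assms[of X] by simp
qed


lemma card_pos: "0 < CARD('n::finite)" by simp

lemma ss_sq: "(ss TYPE('n::finite))\<^sup>2 = real CARD('n) - 1"
  using card_pos[where 'n='n] by (simp add: ss_def)

lemma RR_DD: "RR (DD :: complex^('n::finite \<times> 'n)^('n \<times> 'n)) i i' = (if i = i' then 1 / of_nat CARD('n) else 0)"
proof -
  let ?N = "of_nat CARD('n) :: complex"
  have N0: "?N \<noteq> 0" by simp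
  have ss2: "(complex_of_real (ss TYPE('n)))\<^sup>2 = ?N - 1" unfolding of_real_power[symmetric] ss_sq by simp
  show ?thesis
  proof (cases "i = z0")
    case iz: True
    show ?thesis
    proof (cases "i' = z0")
      case True
      have "RR DD i i' = (\<Sum>j\<in>(UNIV::'n set). 1 / ?N^2)"
        unfolding RR_def iz True by (intro sum.cong refl) (simp add: DD_rep)
      also have "\<dots> = 1 / ?N" using N0 by (simp add: power2_eq_square)
      finally show ?thesis using iz True by simp
    next
      case False
      then show ?thesis using iz by (simp add: RR_zk[OF rel_DD] DD_rep)
    qed
  next
    case inz: False
    show ?thesis
    proof (cases "i' = z0")
      case True
      then show ?thesis using inz by (simp add: RR_kz[OF rel_DD] RR_zk[OF rel_DD] DD_rep)
    next
      case False
      show ?thesis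
      proof (cases "i = i'")
        case True
        have "RR DD i i' = 1 / ?N^2 + (?N - 1) * (1 / ?N^2)"
          using True inz by (simp add: RR_kk[OF rel_DD] DD_rep ss2)
        also have "\<dots> = 1 / ?N" using N0 by (simp add: field_simps power2_eq_square)
        finally show ?thesis using True by simp
      next
        case ne: False
        then show ?thesis using inz False by (simp add: RR_kl[OF rel_DD] DD_rep)
      qed
    qed
  qed
qed

lemma CC_DD: "CC (DD :: complex^('n::finite \<times> 'n)^('n \<times> 'n)) j j' = RR DD j j'"
  unfolding CC_def RR_def DD_entry by (simp add: vv_sym[of _ _ j] vv_sym[of _ _ j'])

lemma trace_DD: "trace (DD :: complex^('n::finite \<times> 'n)^('n \<times> 'n)) = 1"
proof -
  have "trace (DD :: complex^('n \<times> 'n)^('n \<times> 'n)) = (\<Sum>i\<in>(UNIV::'n set). RR DD i i)"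
    unfolding trace_def RR_def by (rule sum_pair[where f="\<lambda>p. DD$p$p"])
  also have "\<dots> = (\<Sum>i\<in>(UNIV::'n set). 1 / of_nat CARD('n))" by (simp add: RR_DD)
  also have "\<dots> = 1" by simp
  finally show ?thesis .
qed

lemma DD_Gamma: "(DD :: complex^('n::finite \<times> 'n)^('n \<times> 'n)) \<in> Gamma_mt"
  unfolding Gamma_mt_def density_def
  by (simp add: psd_DD trace_DD state_kron1 state_kron2 CC_DD marg_suff RR_DD)


lemma qf_expand:
  fixes A :: "complex^'m::finite^'m"
  shows "qf A (\<chi> a. y$a + (if a = r then c else 0)) = qf A y + cnj c * (\<Sum>b\<in>UNIV. A$r$b * y$b)
     + c * (\<Sum>a\<in>UNIV. cnj (y$a) * A$a$r) + cnj c * c * A$r$r"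
proof -
  have e: "\<And>a b. cnj (y$a + (if a = r then c else 0)) * A$a$b * (y$b + (if b = r then c else 0))
     = cnj (y$a) * A$a$b * y$b + (if a = r then cnj c * (A$r$b * y$b) else 0)
       + (if b = r then c * (cnj (y$a) * A$a$r) else 0) + (if a = r \<and> b = r then cnj c * c * A$r$r else 0)"
    by (auto simp: algebra_simps)
  have s1: "(\<Sum>a\<in>UNIV. \<Sum>b\<in>UNIV. (if a = r then cnj c * (A$r$b * y$b) else 0)) = cnj c * (\<Sum>b\<in>UNIV. A$r$b * y$b)"
    by (subst sum_one[of r]) (auto simp: sum_distrib_left)
  have s2: "(\<Sum>a\<in>UNIV. \<Sum>b\<in>UNIV. (if b = r then c * (cnj (y$a) * A$a$r) else 0)) = c * (\<Sum>a\<in>UNIV. cnj (y$a) * A$a$r)"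
    by (simp add: sum_distrib_left)
  have s3: "(\<Sum>a\<in>UNIV. \<Sum>b\<in>UNIV. (if a = r \<and> b = r then cnj c * c * A$r$r else 0)) = cnj c * c * A$r$r"
    by (subst sum_one[of r]) auto
  show ?thesis
    unfolding qf_def vec_lambda_beta e sum.distrib s1 s2 s3 ..
qed

lemma psd_kernel:
  fixes A :: "complex^'m::finite^'m"
  assumes P: "psd A" and Q: "qf A y = 0"
  shows "(\<Sum>b\<in>UNIV. A$r$b * y$b) = 0"
proof -
  define \<beta> where "\<beta> = (\<Sum>b\<in>UNIV. A$r$b * y$b)"
  have herm: "\<And>a b. A$a$b = cnj (A$b$a)" using P unfolding psd_iff_qf by blast
  have hb: "(\<Sum>a\<in>UNIV. cnj (y$a) * A$a$r) = cnj \<beta>"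
    unfolding \<beta>_def cnj_sum by (intro sum.cong refl) (subst herm[of _ r], simp add: mult.commute)
  define m where "m = (cmod \<beta>)\<^sup>2"
  have bm: "cnj \<beta> * \<beta> = of_real m" unfolding m_def complex_norm_square by (rule mult.commute)
  define a where "a = Re (A$r$r)"
  have Ar: "A$r$r = of_real a"
  proof -
    have "Im (A$r$r) = - Im (A$r$r)" using arg_cong[OF herm[of r r], of Im] by simp
    then have "Im (A$r$r) = 0" by simp
    then show ?thesis by (simp add: a_def complex_eq_iff)
  qed
  define t where "t = 1 / (\<bar>a\<bar> + 1)"
  have t0: "t > 0" by (simp add: t_def)
  have ta: "t * a < 2"
  proof -
    have "t * a \<le> t * \<bar>a\<bar>" using t0 by (simp add: mult_left_mono)
    also have "\<dots> < 1" by (simp add: t_def field_simps)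
    finally show ?thesis by simp
  qed
  define c where "c = - (of_real t * \<beta>)"
  have "qf A (\<chi> i. y$i + (if i = r then c else 0)) = cnj c * \<beta> + c * cnj \<beta> + cnj c * c * A$r$r"
    using qf_expand[of A y r c] Q hb by (simp add: \<beta>_def)
  also have "\<dots> = of_real (t * m * (t * a - 2))"
  proof -
    have 1: "cnj c * \<beta> = - (of_real t * (cnj \<beta> * \<beta>))" by (simp add: c_def mult_ac)
    have 2: "c * cnj \<beta> = - (of_real t * (cnj \<beta> * \<beta>))" by (simp add: c_def mult_ac)
    have 3: "cnj c * c * A$r$r = of_real t * of_real t * (cnj \<beta> * \<beta>) * of_real a" by (simp add: c_def Ar mult_ac)
    show ?thesis unfolding 1 2 3 bm by (simp add: algebra_simps)
  qed
  finally have "Re (qf A (\<chi> i. y$i + (if i = r then c else 0))) = t * m * (t * a - 2)" by simp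
  moreover have "Re (qf A (\<chi> i. y$i + (if i = r then c else 0))) \<ge> 0" using P unfolding psd_iff_qf by blast
  ultimately have "t * m * (t * a - 2) \<ge> 0" by simp
  moreover have "m \<ge> 0" by (simp add: m_def)
  ultimately have "m = 0"
  proof -
    assume h: "t * m * (t * a - 2) \<ge> 0" "m \<ge> 0"
    show "m = 0"
    proof (rule ccontr)
      assume "m \<noteq> 0" then have "t * m > 0" using h(2) t0 by simp
      then have "t * m * (t * a - 2) < 0" using ta by (simp add: mult_pos_neg)
      then show False using h(1) by simp
    qed
  qed
  then show ?thesis by (simp add: m_def \<beta>_def)
qed


lemma qf_comb:
  fixes A B :: "complex^'m::finite^'m"
  shows "qf ((1 - u) *\<^sub>R A + u *\<^sub>R B) y = of_real (1 - u) * qf A y + of_real u * qf B y"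
proof -
  have e: "\<And>a b. ((1 - u) *\<^sub>R A + u *\<^sub>R B)$a$b = of_real (1 - u) * A$a$b + of_real u * B$a$b"
    unfolding vector_add_component vector_scaleR_component by (simp add: scaleR_conv_of_real)
  show ?thesis
    unfolding qf_def e sum_distrib_left sum.distrib[symmetric] by (intro sum.cong refl) (simp add: algebra_simps)
qed

lemma sum_two_pt:
  fixes f :: "'a::finite \<Rightarrow> complex"
  shows "(\<Sum>p\<in>UNIV. f p * ((if p = p1 then \<alpha> else 0) + (if p = p2 then \<beta> else 0))) = f p1 * \<alpha> + f p2 * \<beta>"
proof -
  have "(\<Sum>p\<in>UNIV. f p * ((if p = p1 then \<alpha> else 0) + (if p = p2 then \<beta> else 0)))
      = (\<Sum>p\<in>UNIV. (if p = p1 then f p1 * \<alpha> else 0)) + (\<Sum>p\<in>UNIV. (if p = p2 then f p2 * \<beta> else 0))"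
    unfolding sum.distrib[symmetric] by (intro sum.cong refl) (auto simp: distrib_left)
  also have "\<dots> = f p1 * \<alpha> + f p2 * \<beta>" by (simp add: sum_one[of p1] sum_one[of p2])
  finally show ?thesis .
qed

lemma qf_DD_zero:
  assumes "\<And>c. (\<Sum>p\<in>UNIV. complex_of_real (vv c p) * y $ p) = 0"
  shows "qf (DD :: complex^('n::finite \<times> 'n)^('n \<times> 'n)) y = 0"
  by (simp add: qf_DD assms)

context
  fixes A B :: "complex^('n::finite \<times> 'n)^('n \<times> 'n)" and u :: real
  assumes AG: "A \<in> Gamma_mt" and BG: "B \<in> Gamma_mt" and u: "0 < u" "u < 1"
    and Deq: "DD = (1 - u) *\<^sub>R A + u *\<^sub>R B"
begin

lemma psdA: "psd A" using AG by (simp add: Gamma_mt_def density_def)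
lemma psdB: "psd B" using BG by (simp add: Gamma_mt_def density_def)

lemma kerA:
  assumes "\<And>c. (\<Sum>p\<in>UNIV. complex_of_real (vv c p) * y $ p) = 0"
  shows "(\<Sum>b\<in>UNIV. A$r$b * y$b) = 0"
proof (rule psd_kernel[OF psdA])
  have 0: "qf DD y = 0" by (rule qf_DD_zero[OF assms])
  have a: "Im (qf A y) = 0" "Re (qf A y) \<ge> 0" using psdA unfolding psd_iff_qf by blast+
  have b: "Re (qf B y) \<ge> 0" using psdB unfolding psd_iff_qf by blast
  have "(1 - u) * Re (qf A y) + u * Re (qf B y) = 0"
    using arg_cong[OF 0[unfolded Deq qf_comb], of Re] by simp
  then have "Re (qf A y) = 0" using a b u
    by (smt (verit) mult_nonneg_nonneg mult_pos_pos)
  then show "qf A y = 0" using a by (simp add: complex_eq_iff)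
qed

lemma A_col0: "\<not> supp p \<Longrightarrow> A$r$p = 0"
proof -
  assume np: "\<not> supp p"
  have "(\<Sum>b\<in>UNIV. A$r$b * (\<chi> q. (if q = p then 1 else 0))$b) = 0"
    by (rule kerA) (subst sum_one[of p], auto simp: vv_nsupp[OF np])
  then show ?thesis by (subst (asm) sum_one[of p]) auto
qed

lemma A_col1: "k \<noteq> z0 \<Longrightarrow> A$r$(k,z0) = A$r$(z0,k)"
proof -
  assume k: "k \<noteq> z0"
  have "(\<Sum>b\<in>UNIV. A$r$b * (\<chi> q. (if q = (k,z0) then 1 else 0) + (if q = (z0,k) then -1 else 0))$b) = 0"
    by (rule kerA) (simp add: sum_two_pt vv_sym[of _ k])
  then show ?thesis by (simp add: sum_two_pt)
qed

lemma A_col2: "k \<noteq> z0 \<Longrightarrow> A$r$(k,k) = of_real (ss TYPE('n)) * A$r$(z0,z0)"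
proof -
  assume k: "k \<noteq> z0"
  have "(\<Sum>b\<in>UNIV. A$r$b * (\<chi> q. (if q = (k,k) then 1 else 0) + (if q = (z0,z0) then - of_real (ss TYPE('n)) else 0))$b) = 0"
    by (rule kerA) (simp add: sum_two_pt vv_kk[OF k])
  then show ?thesis by (simp add: sum_two_pt)
qed

lemma rel_A: "rel A"
  unfolding rel_def using psdA A_col0 A_col1 A_col2 unfolding psd_iff_qf by blast

lemma RR_A: "RR A i i' = (if i = i' then 1 / of_nat CARD('n) else 0)"
  by (rule marg_nec) (use AG in \<open>simp add: Gamma_mt_def state_kron1\<close>)

lemma A_eq_DD:
  assumes N3: "CARD('n) \<ge> 3"
  shows "A = DD"
proof -
  define N where "N = (of_nat CARD('n) :: complex)"
  define s where "s = complex_of_real (ss TYPE('n))"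
  have N0: "N \<noteq> 0" using N3 by (simp add: N_def)
  have N2: "N - 2 \<noteq> 0"
  proof
    assume "N - 2 = 0" then have "N = of_nat 2" by simp
    then have "CARD('n) = 2" unfolding N_def using of_nat_eq_iff by blast
    then show False using N3 by simp
  qed
  have s2: "s * s = N - 1"
  proof -
    have r: "ss TYPE('n) * ss TYPE('n) = real CARD('n) - 1" using ss_sq[where 'n='n] by (simp add: power2_eq_square)
    have "s * s = complex_of_real (ss TYPE('n) * ss TYPE('n))" by (simp add: s_def)
    also have "\<dots> = N - 1" unfolding r by (simp add: N_def)
    finally show ?thesis .
  qed
  have cs: "cnj s = s" by (simp add: s_def)
  have RA: "rel A" by (rule rel_A)
  have hA: "\<And>a b. A$a$b = cnj (A$b$a)" by (rule rel_herm[OF RA])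
  have zk: "A$(z0,z0)$(z0,k) = 0" if k: "k \<noteq> z0" for k
  proof -
    define w where "w = A$(z0,z0)$(z0,k)"
    have e1: "w + s * cnj w = 0"
      using RR_zk[OF RA k] RR_A[of z0 k] k hA[of "(z0,k)" "(z0,z0)"] by (simp add: w_def s_def)
    have e2: "cnj w + s * w = 0" using arg_cong[OF e1, of cnj] cs by simp
    have "w = s * s * w"
    proof -
      have "w = - s * cnj w" using e1 by (simp add: eq_neg_iff_add_eq_0)
      also have "cnj w = - s * w" using e2 by (simp add: eq_neg_iff_add_eq_0)
      finally show ?thesis by simp
    qed
    then have "(N - 2) * w = 0" unfolding s2 by (simp add: algebra_simps)
    then show ?thesis using N2 by (simp add: w_def)
  qed
  have kz: "A$(z0,k)$(z0,z0) = 0" if k: "k \<noteq> z0" for k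
    using hA[of "(z0,k)" "(z0,z0)"] zk[OF k] by simp
  have kl: "A$(z0,k)$(z0,l) = 0" if "k \<noteq> z0" "l \<noteq> z0" "k \<noteq> l" for k l
    using RR_kl[OF RA that] RR_A[of k l] that by simp
  define a where "a = A$(z0,z0)$(z0,z0)"
  have kk: "A$(z0,k)$(z0,k) = 1 / N - (N - 1) * a" if k: "k \<noteq> z0" for k
  proof -
    have "A$(z0,k)$(z0,k) + s * s * a = 1 / N"
      using RR_kk[OF RA k] RR_A[of k k] by (simp add: a_def s_def N_def power2_eq_square)
    then show ?thesis unfolding s2 by (simp add: algebra_simps)
  qed
  have "1 / N = RR A z0 z0" using RR_A[of z0 z0] by (simp add: N_def)
  also have "\<dots> = a + (\<Sum>j\<in>UNIV - {z0}. A$(z0,j)$(z0,j))"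
    unfolding RR_def a_def by (subst sum.remove[of UNIV z0]) auto
  also have "(\<Sum>j\<in>UNIV - {z0}. A$(z0,j)$(z0,j)) = (\<Sum>j\<in>UNIV - {z0::'n}. 1 / N - (N - 1) * a)"
    by (intro sum.cong refl) (simp add: kk)
  also have "\<dots> = (N - 1) * (1 / N - (N - 1) * a)"
    by (simp add: N_def card_Diff_singleton of_nat_diff)
  finally have "1 / N = a + (N - 1) * (1 / N - (N - 1) * a)" .
  then have "N * (N - 2) * (N * a) = (N - 2) * 1"
    using N0 by (simp add: field_simps)
  moreover have "(N - 2) * (N * (N * a) - 1) = N * (N - 2) * (N * a) - (N - 2) * 1"
    by (simp add: algebra_simps)
  ultimately have "(N - 2) * (N * (N * a) - 1) = 0" by simp
  then have "N * (N * a) = 1" using N2 by simp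
  then have aval: "a = 1 / N^2" using N0 by (simp add: field_simps power2_eq_square)
  have kkval: "A$(z0,k)$(z0,k) = 1 / N^2" if k: "k \<noteq> z0" for k
    unfolding kk[OF k] aval using N0 by (simp add: field_simps power2_eq_square)
  show ?thesis
  proof (rule rel_eq[OF RA rel_DD])
    fix c d :: 'n
    show "A $ (z0, c) $ (z0, d) = DD $ (z0, c) $ (z0, d)"
      unfolding DD_rep
      using aval kkval zk kz kl by (cases "c = z0"; cases "d = z0"; cases "c = d") (auto simp: a_def N_def)
  qed
qed

end


lemma DD_extreme:
  assumes N3: "CARD('n::finite) \<ge> 3"
  shows "(DD :: complex^('n \<times> 'n)^('n \<times> 'n)) extreme_point_of Gamma_mt"
  unfolding extreme_point_of_def
proof (intro conjI ballI notI)
  show "DD \<in> Gamma_mt" by (rule DD_Gamma)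
next
  fix a b :: "complex^('n \<times> 'n)^('n \<times> 'n)"
  assume a: "a \<in> Gamma_mt" and b: "b \<in> Gamma_mt" and "DD \<in> open_segment a b"
  then obtain u where ab: "a \<noteq> b" and u: "0 < u" "u < 1" and D: "DD = (1 - u) *\<^sub>R a + u *\<^sub>R b"
    unfolding in_segment by blast
  have "a = DD" by (rule A_eq_DD[OF a b u D N3])
  moreover have "b = DD"
  proof (rule A_eq_DD[OF b a _ _ _ N3])
    show "0 < 1 - u" "1 - u < 1" using u by auto
    show "DD = (1 - (1 - u)) *\<^sub>R b + (1 - u) *\<^sub>R a" using D by (simp add: add.commute)
  qed
  ultimately show False using ab by simp
qed

lemma row_DD_z: "row (z0,c) (DD :: complex^('n::finite \<times> 'n)^('n \<times> 'n)) = (\<chi> q. complex_of_real (vv c q / real CARD('n)))"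
proof -
  have "\<And>q. (\<Sum>e\<in>UNIV. vv e (z0,c) * vv e q) = vv c q / real CARD('n)"
    unfolding vv_z by (subst sum_one[of c]) auto
  then show ?thesis by (simp add: row_def DD_entry)
qed

lemma rank_DD: "rank (DD :: complex^('n::finite \<times> 'n)^('n \<times> 'n)) = CARD('n)"
proof -
  define f where "f = (\<lambda>c::'n. row (z0,c) (DD :: complex^('n \<times> 'n)^('n \<times> 'n)))"
  define R0 where "R0 = range f"
  let ?N = "real CARD('n)"
  let ?D = "DD :: complex^('n \<times> 'n)^('n \<times> 'n)"
  have N0: "?N \<noteq> 0" by simp
  have fz: "f c $ (z0, d) = (if c = d then complex_of_real (1 / ?N^2) else 0)" for c d :: 'n
    by (simp add: f_def row_DD_z vv_z power2_eq_square)
  have inj: "inj f"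
  proof (rule injI)
    fix c d :: 'n assume "f c = f d"
    then have "f c $ (z0,c) = f d $ (z0,c)" by simp
    then show "c = d" using N0 by (simp add: fz split: if_splits)
  qed
  have sub1: "R0 \<subseteq> rows ?D" unfolding R0_def f_def rows_def by blast
  have sub2: "rows ?D \<subseteq> vec.span R0"
  proof
    fix v assume "v \<in> rows ?D"
    then obtain p where v: "v = row p ?D" unfolding rows_def by blast
    have "v = (\<Sum>c\<in>UNIV. complex_of_real (vv c p * ?N) *s f c)"
      unfolding v f_def row_DD_z
      by (simp add: vec_eq_iff row_def DD_entry of_real_sum[symmetric] mult_ac)
    also have "\<dots> \<in> vec.span R0"
      by (intro vec.span_sum vec.span_scale vec.span_base) (simp add: R0_def)
    finally show "v \<in> vec.span R0" .
  qed
  have "vec.span (rows ?D) = vec.span R0"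
    unfolding vec.span_eq using sub1 sub2 vec.span_superset by blast
  then have "vec.dim (vec.span (rows ?D)) = vec.dim (vec.span R0)"
    by (rule arg_cong)
  then have "vec.dim (rows ?D) = vec.dim R0"
    unfolding vec.dim_span .
  moreover have "vec.independent R0"
  proof
    assume "vec.dependent R0"
    then obtain w where w: "\<exists>v\<in>R0. w v \<noteq> 0" "(\<Sum>v\<in>R0. w v *s v) = 0"
      using vec.dependent_finite[of R0] by (auto simp: R0_def)
    then obtain c where c: "w (f c) \<noteq> 0" unfolding R0_def by blast
    have "(\<Sum>v\<in>R0. w v *s v) = (\<Sum>d\<in>UNIV. w (f d) *s f d)"
      unfolding R0_def by (rule sum.reindex[OF inj, unfolded comp_def])
    then have "(\<Sum>d\<in>UNIV. w (f d) *s f d) $ (z0,c) = 0" using w(2) by simp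
    moreover have "(\<Sum>d\<in>UNIV. w (f d) *s f d) $ (z0,c) = w (f c) * complex_of_real (1 / ?N^2)"
      by (simp add: fz sum_one[of c])
    ultimately show False using c N0 by simp
  qed
  then have "vec.dim R0 = card R0" by (rule vec.dim_eq_card_independent)
  moreover have "card R0 = CARD('n)" unfolding R0_def by (rule card_image[OF inj])
  ultimately show ?thesis by (simp add: row_rank_def_gen)
qed


theorem theorem2p7:
  assumes "CARD('n::finite) \<ge> 5"
  shows "(\<exists>D :: complex^('n \<times> 'n)^('n \<times> 'n).
            D extreme_point_of Gamma_mt \<and> rank D = CARD('n))
         \<and> CARD('n) \<le> MR TYPE('n)"
proof -
  have N3: "CARD('n) \<ge> 3" using assms by simp
  have ex: "(DD :: complex^('n \<times> 'n)^('n \<times> 'n)) extreme_point_of Gamma_mt" by (rule DD_extreme[OF N3])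
  have rk: "rank (DD :: complex^('n \<times> 'n)^('n \<times> 'n)) = CARD('n)" by (rule rank_DD)
  let ?S = "rank ` {D :: complex^('n \<times> 'n)^('n \<times> 'n). D extreme_point_of Gamma_mt}"
  have "?S \<subseteq> {..CARD('n \<times> 'n)}"
  proof
    fix r assume "r \<in> ?S"
    then obtain D :: "complex^('n \<times> 'n)^('n \<times> 'n)" where "r = rank D" by blast
    then show "r \<in> {..CARD('n \<times> 'n)}"
      using dim_subset_UNIV_cart_gen[of "rows D"] by (simp add: row_rank_def_gen)
  qed
  then have fin: "finite ?S" by (rule finite_subset) simp
  have "CARD('n) \<in> ?S" using ex rk by (metis (mono_tags, lifting) image_eqI mem_Collect_eq)
  then have "CARD('n) \<le> Max ?S" using fin by simp
  then show ?thesis using ex rk by (auto simp: MR_def)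
qed

end
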